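(* For every $\mu\in[0,\infty)$ and every $z\in\mathbb{C}$ not in the spectrum of $F(\mu)$, with $D(z,\mu)=\det(zI-F(\mu))$, $$|D(z,\mu)|^{-2}(2|z|^2+1)-\frac{2}{2|z|^2+1}\le\|(zI-F(\mu))^{-1}\|^2\le|D(z,\mu)|^{-2}(2|z|^2+1),$$ where $\|\cdot\|$ is the operator norm on $\mathbb{C}^2$ with the standard Hermitian norm.
   Context: For $\mu\in[0,\infty)$, $F(\mu)=\begin{bmatrix}0&F_{+-}(\mu)\\ F_{-+}(\mu)&0\end{bmatrix}$ with $F_{+-}(\mu)=\frac{1}{\sqrt{2\pi}}e^{i\pi/4}e^{-\pi\mu/2}\Gamma(\tfrac12+i\mu)$ and $F_{-+}(\mu)=\frac{1}{\sqrt{2\pi}}e^{i\pi/4}e^{\pi\mu/2}\Gamma(\tfrac12-i\mu)$, where $\Gamma$ is Euler's Gamma function; $I$ is the $2\times2$ identity matrix. *)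

theory Defs
  imports "HOL-Analysis.Analysis"
begin

definition Fpm :: "real \<Rightarrow> complex" where
  "Fpm \<mu> = complex_of_real (1 / sqrt (2 * pi)) * exp (\<i> * complex_of_real (pi / 4))
            * complex_of_real (exp (- pi * \<mu> / 2)) * Gamma (1/2 + \<i> * complex_of_real \<mu>)"

definition Fmp :: "real \<Rightarrow> complex" where
  "Fmp \<mu> = complex_of_real (1 / sqrt (2 * pi)) * exp (\<i> * complex_of_real (pi / 4))
            * complex_of_real (exp (pi * \<mu> / 2)) * Gamma (1/2 - \<i> * complex_of_real \<mu>)"

definition Fmat :: "real \<Rightarrow> complex^2^2" where
  "Fmat \<mu> = (\<chi> i j. if i = 1 \<and> j = 2 then Fpm \<mu>
                     else if i = 2 \<and> j = 1 then Fmp \<mu> else 0)"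

definition mat_spectrum :: "complex^'n^'n \<Rightarrow> complex set" where
  "mat_spectrum A = {z. \<not> invertible (mat z - A)}"

definition Dfun :: "complex \<Rightarrow> real \<Rightarrow> complex" where
  "Dfun z \<mu> = det (mat z - Fmat \<mu>)"

end

theory Submission
  imports Defs
begin

lemma norm2: "(norm (x::complex^2))\<^sup>2 = (cmod (x$1))\<^sup>2 + (cmod (x$2))\<^sup>2"
  by (simp add: norm_vec_def L2_set_def sum_2)

lemma lag: "((cmod p)\<^sup>2+(cmod q)\<^sup>2) * ((cmod u)\<^sup>2+(cmod v)\<^sup>2)
   = (cmod (p * u+q * v))\<^sup>2 + (cmod (p * cnj v - q * cnj u))\<^sup>2"
proof -
  have "complex_of_real (((cmod p)\<^sup>2+(cmod q)\<^sup>2) * ((cmod u)\<^sup>2+(cmod v)\<^sup>2))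
   = complex_of_real ((cmod (p * u+q * v))\<^sup>2 + (cmod (p * cnj v - q * cnj u))\<^sup>2)"
    by (simp only: of_real_add of_real_mult complex_norm_square complex_cnj_add complex_cnj_mult
        complex_cnj_diff complex_cnj_cnj) algebra
  then show ?thesis using of_real_eq_iff by blast
qed

lemma mv2: "(N *v (x::complex^2)) $ i = N$i$1 * x$1 + N$i$2 * x$2"
  by (simp add: matrix_vector_mult_def sum_2)

definition frob :: "complex^2^2 \<Rightarrow> real" where
  "frob N = (cmod (N$1$1))\<^sup>2 + (cmod (N$1$2))\<^sup>2 + (cmod (N$2$1))\<^sup>2 + (cmod (N$2$2))\<^sup>2"

lemma upper2: "(norm (N *v x))\<^sup>2 \<le> frob N * (norm x)\<^sup>2"
proof -
  have e: "(norm (N *v x))\<^sup>2 = (cmod (N$1$1 * x$1 + N$1$2 * x$2))\<^sup>2 + (cmod (N$2$1 * x$1 + N$2$2 * x$2))\<^sup>2"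
    by (simp only: norm2 mv2)
  have l1: "(cmod (N$1$1 * x$1 + N$1$2 * x$2))\<^sup>2 \<le> ((cmod (N$1$1))\<^sup>2+(cmod (N$1$2))\<^sup>2) * ((cmod (x$1))\<^sup>2+(cmod (x$2))\<^sup>2)"
    using lag[of "N$1$1" "N$1$2" "x$1" "x$2"] zero_le_power2[of "cmod (N$1$1 * cnj (x$2) - N$1$2 * cnj (x$1))"] by linarith
  have l2: "(cmod (N$2$1 * x$1 + N$2$2 * x$2))\<^sup>2 \<le> ((cmod (N$2$1))\<^sup>2+(cmod (N$2$2))\<^sup>2) * ((cmod (x$1))\<^sup>2+(cmod (x$2))\<^sup>2)"
    using lag[of "N$2$1" "N$2$2" "x$1" "x$2"] zero_le_power2[of "cmod (N$2$1 * cnj (x$2) - N$2$2 * cnj (x$1))"] by linarith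
  have e2: "frob N * (norm x)\<^sup>2 = ((cmod (N$1$1))\<^sup>2+(cmod (N$1$2))\<^sup>2) * ((cmod (x$1))\<^sup>2+(cmod (x$2))\<^sup>2) + ((cmod (N$2$1))\<^sup>2+(cmod (N$2$2))\<^sup>2) * ((cmod (x$1))\<^sup>2+(cmod (x$2))\<^sup>2)"
    unfolding norm2 frob_def by (simp only: distrib_right add.assoc)
  show ?thesis unfolding e e2 using l1 l2 by linarith
qed

lemma onorm_upper2: "(onorm (\<lambda>x. N *v x))\<^sup>2 \<le> frob N"
proof -
  have f0: "0 \<le> frob N" by (simp add: frob_def)
  have "onorm (\<lambda>x. N *v x) \<le> sqrt (frob N)"
  proof (rule onorm_le)
    fix x
    have "(norm (N *v x))\<^sup>2 \<le> (sqrt (frob N) * norm x)\<^sup>2"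
      using upper2[of N x] f0 by (simp add: power_mult_distrib)
    then show "norm (N *v x) \<le> sqrt (frob N) * norm x"
      by (rule power2_le_imp_le) (simp add: f0)
  qed
  moreover have "0 \<le> onorm (\<lambda>x. N *v x)"
    by (rule onorm_pos_le) (rule matrix_vector_mul_bounded_linear)
  ultimately have "(onorm (\<lambda>x. N *v x))\<^sup>2 \<le> (sqrt (frob N))\<^sup>2"
    by (rule power_mono)
  then show ?thesis using f0 by simp
qed

lemma ident2: "(cmod (p * cnj p + q * cnj q))\<^sup>2 + (cmod (r * cnj p + s * cnj q))\<^sup>2
   + (cmod (p * cnj r + q * cnj s))\<^sup>2 + (cmod (r * cnj r + s * cnj s))\<^sup>2
   = ((cmod p)\<^sup>2 + (cmod q)\<^sup>2 + (cmod r)\<^sup>2 + (cmod s)\<^sup>2) * ((cmod p)\<^sup>2 + (cmod q)\<^sup>2 + (cmod r)\<^sup>2 + (cmod s)\<^sup>2) - 2 * (cmod (p * s - q * r))\<^sup>2"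
proof -
  have sq: "cmod (a * cnj a + b * cnj b) = (cmod a)\<^sup>2 + (cmod b)\<^sup>2" for a b :: complex
  proof -
    have "a * cnj a + b * cnj b = complex_of_real ((cmod a)\<^sup>2 + (cmod b)\<^sup>2)"
      by (simp only: of_real_add complex_norm_square)
    then have "cmod (a * cnj a + b * cnj b) = cmod (complex_of_real ((cmod a)\<^sup>2 + (cmod b)\<^sup>2))"
      by (simp only:)
    also have "\<dots> = (cmod a)\<^sup>2 + (cmod b)\<^sup>2" by (simp only: norm_of_real) (rule abs_of_nonneg, simp)
    finally show ?thesis .
  qed
  have c: "cmod (r * cnj p + s * cnj q) = cmod (p * cnj r + q * cnj s)"
  proof -
    have "r * cnj p + s * cnj q = cnj (p * cnj r + q * cnj s)" by simp
    then show ?thesis by (simp only: complex_mod_cnj)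
  qed
  have l: "((cmod p)\<^sup>2+(cmod q)\<^sup>2) * ((cmod r)\<^sup>2+(cmod s)\<^sup>2)
     = (cmod (p * cnj r + q * cnj s))\<^sup>2 + (cmod (p * s - q * r))\<^sup>2"
    using lag[of p q "cnj r" "cnj s"] by simp
  show ?thesis unfolding sq c using l by (simp add: power2_eq_square algebra_simps)
qed

lemma onorm_lower2: "(frob N)\<^sup>2 - 2 * (cmod (det N))\<^sup>2 \<le> (onorm (\<lambda>x. N *v x))\<^sup>2 * frob N"
proof -
  define L where "L = onorm (\<lambda>x. N *v x)"
  have L0: "0 \<le> L" unfolding L_def
    by (rule onorm_pos_le) (rule matrix_vector_mul_bounded_linear)
  have key: "(norm (N *v x))\<^sup>2 \<le> L\<^sup>2 * (norm x)\<^sup>2" for x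
  proof -
    have "norm (N *v x) \<le> L * norm x" unfolding L_def
      using onorm[OF matrix_vector_mul_bounded_linear, of N x] by simp
    then have "(norm (N *v x))\<^sup>2 \<le> (L * norm x)\<^sup>2" by (rule power_mono) auto
    then show ?thesis by (simp add: power_mult_distrib)
  qed
  define x1 :: "complex^2" where "x1 = (\<chi> j. cnj (N$1$j))"
  define x2 :: "complex^2" where "x2 = (\<chi> j. cnj (N$2$j))"
  have "(frob N)\<^sup>2 - 2 * (cmod (det N))\<^sup>2 = (norm (N *v x1))\<^sup>2 + (norm (N *v x2))\<^sup>2"
    unfolding power2_eq_square[of "frob N"]
    using ident2[of "N$1$1" "N$1$2" "N$2$1" "N$2$2"]
    by (simp add: norm2 mv2 x1_def x2_def frob_def det_2)
  also have "\<dots> \<le> L\<^sup>2 * (norm x1)\<^sup>2 + L\<^sup>2 * (norm x2)\<^sup>2" by (intro add_mono key)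
  also have "\<dots> = L\<^sup>2 * frob N"
    by (simp add: norm2 x1_def x2_def frob_def algebra_simps)
  finally show ?thesis unfolding L_def .
qed

lemma gamma_sq:
  fixes m :: real
  shows "(cmod (Gamma (1/2 + \<i> * complex_of_real m)))\<^sup>2 = 2 * pi / (exp (pi*m) + inverse (exp (pi*m)))"
proof -
  define w where "w = 1/2 + \<i> * complex_of_real m"
  have cw: "cnj w = 1 - w" by (simp add: w_def complex_eq_iff)
  have "sin (complex_of_real pi * w) = cos (\<i> * complex_of_real (pi*m))"
  proof -
    have "complex_of_real pi * w = of_real (pi/2) + \<i> * complex_of_real (pi*m)"
      by (simp add: w_def algebra_simps)
    then show ?thesis by (simp add: sin_add)
  qed
  also have "\<dots> = complex_of_real ((exp (pi*m) + inverse (exp (pi*m))) / 2)"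
    by (rule cosh_real[symmetric])
  finally have s: "sin (complex_of_real pi * w) = complex_of_real ((exp (pi*m) + inverse (exp (pi*m))) / 2)" .
  have "complex_of_real ((cmod (Gamma w))\<^sup>2) = Gamma w * Gamma (1 - w)"
    by (subst complex_norm_square) (simp add: cnj_Gamma cw)
  also have "\<dots> = complex_of_real (2 * pi / (exp (pi*m) + inverse (exp (pi*m))))"
    by (simp add: Gamma_reflection_complex s)
  finally show ?thesis unfolding w_def using of_real_eq_iff by blast
qed

lemma Fsum: "(cmod (Fpm m))\<^sup>2 + (cmod (Fmp m))\<^sup>2 = 1"
proof -
  define E where "E = exp (pi * m)"
  have E0: "E > 0" by (simp add: E_def)
  have g1: "(cmod (Gamma (1/2 + \<i> * complex_of_real m)))\<^sup>2 = 2 * pi / (E + inverse E)"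
    using gamma_sq[of m] by (simp add: E_def)
  have g2: "(cmod (Gamma (1/2 - \<i> * complex_of_real m)))\<^sup>2 = 2 * pi / (E + inverse E)"
  proof -
    have "1/2 - \<i> * complex_of_real m = 1/2 + \<i> * complex_of_real (-m)" by simp
    then show ?thesis using gamma_sq[of "-m"] by (simp add: E_def exp_minus add.commute)
  qed
  have e1: "(exp (- pi * m / 2))\<^sup>2 = inverse E"
    unfolding E_def power2_eq_square mult_exp_exp exp_minus[symmetric] by (simp add: field_simps)
  have e2: "(exp (pi * m / 2))\<^sup>2 = E"
    by (simp add: E_def power2_eq_square exp_add[symmetric])
  have s2: "(1 / sqrt (2 * pi))\<^sup>2 = 1 / (2 * pi)"
    by (simp add: power_divide)
  have ca: "cmod (Fpm m) = (1 / sqrt (2 * pi)) * exp (- pi * m / 2) * cmod (Gamma (1/2 + \<i> * complex_of_real m))"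
    unfolding Fpm_def norm_mult norm_exp_i_times norm_of_real by simp
  have cb: "cmod (Fmp m) = (1 / sqrt (2 * pi)) * exp (pi * m / 2) * cmod (Gamma (1/2 - \<i> * complex_of_real m))"
    unfolding Fmp_def norm_mult norm_exp_i_times norm_of_real by simp
  have a: "(cmod (Fpm m))\<^sup>2 = 1 / (2 * pi) * inverse E * (2 * pi / (E + inverse E))"
    unfolding ca power_mult_distrib s2 e1 g1 ..
  have b: "(cmod (Fmp m))\<^sup>2 = 1 / (2 * pi) * E * (2 * pi / (E + inverse E))"
    unfolding cb power_mult_distrib s2 e2 g2 ..
  have h: "1 + E * E \<noteq> 0" using E0 by (smt (verit) mult_pos_pos)
  have h2: "E + inverse E \<noteq> 0" using E0 by (smt (verit) positive_imp_inverse_positive)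
  have "1 / (2 * pi) * inverse E * (2 * pi / (E + inverse E)) + 1 / (2 * pi) * E * (2 * pi / (E + inverse E))
      = (inverse E + E) / (E + inverse E)" using pi_gt_zero E0 h by (simp add: field_simps)
  also have "\<dots> = 1" using h2 by (simp add: add.commute)
  finally show ?thesis unfolding a b .
qed

theorem lemma4p6:
  fixes \<mu> :: real and z :: complex
  assumes "\<mu> \<ge> 0" and "z \<notin> mat_spectrum (Fmat \<mu>)"
  shows "(2 * (cmod z)\<^sup>2 + 1) / (cmod (Dfun z \<mu>))\<^sup>2 - 2 / (2 * (cmod z)\<^sup>2 + 1)
           \<le> (onorm (\<lambda>x. matrix_inv (mat z - Fmat \<mu>) *v x))\<^sup>2
       \<and> (onorm (\<lambda>x. matrix_inv (mat z - Fmat \<mu>) *v x))\<^sup>2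
           \<le> (2 * (cmod z)\<^sup>2 + 1) / (cmod (Dfun z \<mu>))\<^sup>2"
proof -
  define a where "a = Fpm \<mu>"
  define b where "b = Fmp \<mu>"
  define M where "M = mat z - Fmat \<mu>"
  define D where "D = Dfun z \<mu>"
  have M11: "M$1$1 = z" and M12: "M$1$2 = - a" and M21: "M$2$1 = - b" and M22: "M$2$2 = z"
    by (simp_all add: M_def Fmat_def mat_def a_def b_def)
  have DD: "D = z * z - a * b"
    unfolding D_def Dfun_def M_def[symmetric] det_2 M11 M12 M21 M22 by simp
  have DD2: "z * z = D + a * b" using DD by simp
  have inv: "invertible M" using assms(2) by (simp add: mat_spectrum_def M_def)
  have D0: "D \<noteq> 0" using inv unfolding D_def Dfun_def M_def[symmetric] by (simp add: invertible_det_nz)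
  define N :: "complex^2^2" where "N = (\<chi> i j. (if i = j then z else if i = 1 then a else b) / D)"
  have N11: "N$1$1 = z / D" and N12: "N$1$2 = a / D" and N21: "N$2$1 = b / D" and N22: "N$2$2 = z / D"
    by (simp_all add: N_def)
  have MN: "M ** N = mat 1"
    unfolding vec_eq_iff forall_2 matrix_matrix_mult_def
    using D0 by (simp add: sum_2 M11 M12 M21 M22 N11 N12 N21 N22 mat_def field_simps DD2)
  have NM: "N ** M = mat 1"
    unfolding vec_eq_iff forall_2 matrix_matrix_mult_def
    using D0 by (simp add: sum_2 M11 M12 M21 M22 N11 N12 N21 N22 mat_def field_simps DD2)
  have MI: "matrix_inv M = N"
    unfolding matrix_inv_def
  proof (rule some_equality)
    show "M ** N = mat 1 \<and> N ** M = mat 1" using MN NM by blast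
  next
    fix A' assume "M ** A' = mat 1 \<and> A' ** M = mat 1"
    then have "A' ** M = mat 1" by blast
    then show "A' = N" by (metis MN matrix_mul_assoc matrix_mul_lid matrix_mul_rid)
  qed
  define G where "G = 2 * (cmod z)\<^sup>2 + 1"
  define Dn where "Dn = (cmod D)\<^sup>2"
  have G0: "G > 0" by (simp add: G_def add_nonneg_pos)
  have Dn0: "Dn > 0" using D0 by (simp add: Dn_def)
  have fr: "frob N = G / Dn"
    using Fsum[of \<mu>]
    by (simp add: frob_def N11 N12 N21 N22 norm_divide power_divide G_def Dn_def a_def b_def add_divide_distrib; metis add_divide_distrib)
  have dt: "(cmod (det N))\<^sup>2 = 1 / Dn"
  proof -
    have "det N = (z * z - a * b) / (D * D)" unfolding det_2 N11 N12 N21 N22 by (simp add: diff_divide_distrib)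
    also have "\<dots> = 1 / D" unfolding DD[symmetric] using D0 by simp
    finally have "det N = 1 / D" .
    then show ?thesis by (simp add: Dn_def norm_divide power_divide)
  qed
  define lam where "lam = (onorm (\<lambda>x. N *v x))\<^sup>2"
  have up: "lam \<le> G / Dn" unfolding lam_def fr[symmetric] by (rule onorm_upper2)
  have lo0: "(G / Dn)\<^sup>2 - 2 / Dn \<le> lam * (G / Dn)"
    using onorm_lower2[of N] unfolding fr dt lam_def by simp
  have FrP: "G / Dn > 0" using G0 Dn0 by simp
  have "((G / Dn)\<^sup>2 - 2 / Dn) / (G / Dn) \<le> lam"
    unfolding pos_divide_le_eq[OF FrP] by (rule lo0)
  moreover have "((G / Dn)\<^sup>2 - 2 / Dn) / (G / Dn) = G / Dn - 2 / G"
    using G0 Dn0 by (simp add: field_simps power2_eq_square)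
  ultimately have lo: "G / Dn - 2 / G \<le> lam" by simp
  show ?thesis using up lo
    unfolding lam_def G_def Dn_def D_def M_def[symmetric] MI by simp
qed

end
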